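(* Fix constants $\mu_1,\ldots,\mu_M\ge 0$ and $P_1^{\rm ST},\ldots,P_K^{\rm ST}>0$. For a channel realization $\boldsymbol{\alpha}$ consider the problem $$\max_{p_1,\ldots,p_K}\ \log\Big(1+\sum_{k=1}^K h_kp_k\Big)-\sum_{m=1}^M\mu_m\sum_{k=1}^K g_{km}p_k\quad\text{s.t.}\quad 0\le p_k\le P_k^{\rm ST}\ \ \forall k.$$ Let $r_k=\frac{h_k}{\sum_{m=1}^M\mu_m g_{km}}$ and let $\pi$ be a permutation of $\{1,\ldots,K\}$ with $r_{\pi(1)}\ge r_{\pi(2)}\ge\cdots\ge r_{\pi(K)}$. Let $|\mathcal{I}|$ be the largest $x\in\{1,\ldots,K\}$ such that $r_{\pi(x)}>1+\sum_{b=1}^{x-1}h_{\pi(b)}P_{\pi(b)}^{\rm ST}$ (and $|\mathcal{I}|=0$ if no such $x$ exists). Then, for almost every realization $\boldsymbol{\alpha}$, the optimal solution is $$p_{\pi(a)}^*=\begin{cases}P_{\pi(a)}^{\rm ST}, & a<|\mathcal{I}|,\\[2pt] \min\Big(P_{\pi(|\mathcal{I}|)}^{\rm ST},\ \Big(r_{\pi(|\mathcal{I}|)}-1-\sum_{b=1}^{|\mathcal{I}|-1}h_{\pi(b)}P_{\pi(b)}^{\rm ST}\Big)\frac{1}{h_{\pi(|\mathcal{I}|)}}\Big), & a=|\mathcal{I}|,\\[2pt] 0, & a>|\mathcal{I}|.\end{cases}$$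
   Context: $\boldsymbol{\alpha}=(h_1,\ldots,h_K,g_{11},\ldots,g_{KM})$ is a random vector of nonnegative channel power gains ($h_k$: secondary user $k$ to secondary base station; $g_{km}$: secondary user $k$ to primary receiver $m$) with a continuous, differentiable joint cumulative distribution function, the $h_k$'s and $g_{km}$'s being independent. Convention: $x/0=+\infty$ for $x>0$ and $\min(a,+\infty)=a$. *)

theory Defs
  imports "HOL-Probability.Probability"
begin

text \<open>Users are indexed by a finite type 'k (K = CARD('k)), primary receivers by a
finite type 'm (M = CARD('m)).  A channel realization is given by
h :: 'k => real and g :: 'k => 'm => real.\<close>

definition interf_cost :: "('m::finite \<Rightarrow> real) \<Rightarrow> ('k \<Rightarrow> 'm \<Rightarrow> real) \<Rightarrow> 'k \<Rightarrow> real" where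
  "interf_cost mu g k = (\<Sum>m\<in>UNIV. mu m * g k m)"

text \<open>r_k = h_k / (sum_m mu_m g_km), with the convention x/0 = +infinity.\<close>
definition ratio :: "('m::finite \<Rightarrow> real) \<Rightarrow> ('k \<Rightarrow> real) \<Rightarrow> ('k \<Rightarrow> 'm \<Rightarrow> real) \<Rightarrow> 'k \<Rightarrow> ereal" where
  "ratio mu h g k = (if interf_cost mu g k = 0 then PInfty else ereal (h k / interf_cost mu g k))"

definition objective :: "('m::finite \<Rightarrow> real) \<Rightarrow> ('k::finite \<Rightarrow> real) \<Rightarrow> ('k \<Rightarrow> 'm \<Rightarrow> real)
    \<Rightarrow> ('k \<Rightarrow> real) \<Rightarrow> real" where
  "objective mu h g p = ln (1 + (\<Sum>k\<in>UNIV. h k * p k)) - (\<Sum>m\<in>UNIV. mu m * (\<Sum>k\<in>UNIV. g k m * p k))"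

definition feasible :: "('k \<Rightarrow> real) \<Rightarrow> ('k \<Rightarrow> real) \<Rightarrow> bool" where
  "feasible Pst p \<longleftrightarrow> (\<forall>k. 0 \<le> p k \<and> p k \<le> Pst k)"

definition partial_rx :: "('k \<Rightarrow> real) \<Rightarrow> ('k \<Rightarrow> real) \<Rightarrow> (nat \<Rightarrow> 'k) \<Rightarrow> nat \<Rightarrow> real" where
  "partial_rx Pst h \<pi> x = (\<Sum>b = 1..<x. h (\<pi> b) * Pst (\<pi> b))"

definition Icard :: "('m::finite \<Rightarrow> real) \<Rightarrow> ('k::finite \<Rightarrow> real) \<Rightarrow> ('k \<Rightarrow> real) \<Rightarrow> ('k \<Rightarrow> 'm \<Rightarrow> real)
    \<Rightarrow> (nat \<Rightarrow> 'k) \<Rightarrow> nat" where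
  "Icard mu Pst h g \<pi> = Max ({0} \<union> {x \<in> {1..CARD('k)}.
      ratio mu h g (\<pi> x) > ereal (1 + partial_rx Pst h \<pi> x)})"

definition opt_power :: "('m::finite \<Rightarrow> real) \<Rightarrow> ('k::finite \<Rightarrow> real) \<Rightarrow> ('k \<Rightarrow> real) \<Rightarrow> ('k \<Rightarrow> 'm \<Rightarrow> real)
    \<Rightarrow> (nat \<Rightarrow> 'k) \<Rightarrow> nat \<Rightarrow> real" where
  "opt_power mu Pst h g \<pi> a =
    (let I = Icard mu Pst h g \<pi> in
     if a < I then Pst (\<pi> a)
     else if a = I then
       (if ratio mu h g (\<pi> I) = PInfty then Pst (\<pi> I)
        else min (Pst (\<pi> I))
                 ((real_of_ereal (ratio mu h g (\<pi> I)) - 1 - partial_rx Pst h \<pi> I) * (1 / h (\<pi> I))))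
     else 0)"

end

theory Submission
  imports Defs
begin


lemma ae_negl:
  fixes F :: "'w \<Rightarrow> 'a::euclidean_space"
  assumes "F \<in> borel_measurable M" "absolutely_continuous lborel (distr M lborel F)" "negligible T"
  shows "AE w in M. F w \<notin> T"
proof -
  have "T \<in> null_sets (completion lborel)" using assms(3) negligible_iff_null_sets by blast
  then obtain N where N: "N \<in> null_sets lborel" "T \<subseteq> N" unfolding null_sets_completion_iff2 by blast
  have m: "F \<in> measurable M lborel" using assms(1) by simp
  have "N \<in> null_sets (distr M lborel F)" using assms(2) N unfolding absolutely_continuous_def by blast
  then have "F -` N \<inter> space M \<in> null_sets M" using null_sets_distr_iff[OF m] by blast
  then show ?thesis by (rule AE_I') (use N in auto)
qed

lemma meas:
  fixes H :: "'k::finite \<Rightarrow> 'w \<Rightarrow> real" and G :: "'k \<Rightarrow> 'm::finite \<Rightarrow> 'w \<Rightarrow> real"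
  assumes "\<And>k. H k \<in> borel_measurable M"
    and "\<And>k m. G k m \<in> borel_measurable M"
  shows "(\<lambda>w. ((\<chi> k. H k w) :: real^'k,
                                  (\<chi> km. G (fst km) (snd km) w) :: real^('k \<times> 'm))) \<in> borel_measurable M"
proof -
  have 1: "(\<lambda>w. (\<chi> k. H k w) :: real^'k) \<in> borel_measurable M"
    unfolding borel_measurable_euclidean_space[where 'c="real^'k"]
    using assms(1) by (auto simp: Basis_vec_def inner_axis)
  have 2: "(\<lambda>w. (\<chi> km. G (fst km) (snd km) w) :: real^('k \<times> 'm)) \<in> borel_measurable M"
    unfolding borel_measurable_euclidean_space[where 'c="real^('k\<times>'m)"]
    using assms(2) by (auto simp: Basis_vec_def inner_axis)
  show ?thesis using 1 2 by measurable
qed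


lemma bl1: "bounded_linear (\<lambda>x::(real^'k::finite) \<times> (real^('k\<times>'m::finite)). fst x $ k)"
  by (rule bounded_linear_compose[OF bounded_linear_vec_nth bounded_linear_fst])
lemma bl2: "bounded_linear (\<lambda>x::(real^'k::finite) \<times> (real^('k\<times>'m::finite)). snd x $ km)"
  by (rule bounded_linear_compose[OF bounded_linear_vec_nth bounded_linear_snd])
lemma d2: "(\<lambda>x::(real^'k::finite) \<times> (real^('k\<times>'m::finite)). snd x $ km) differentiable F"
  by (rule bounded_linear_imp_differentiable[OF bl2])

lemma negl1: "negligible {x::(real^'k::finite) \<times> (real^('k\<times>'m::finite)). fst x $ k = 0}"
proof -
  have "{x::(real^'k) \<times> (real^('k\<times>'m)). fst x $ k = 0} = {x. (axis k 1, 0) \<bullet> x = 0}"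
    by (auto simp: inner_prod_def inner_axis')
  moreover have "negligible {x::(real^'k) \<times> (real^('k\<times>'m)). (axis k 1, 0) \<bullet> x = 0}"
    by (rule negligible_hyperplane) (simp add: zero_prod_def axis_eq_0_iff)
  ultimately show ?thesis by simp
qed

lemma negl2:
  fixes mu :: "'m::finite \<Rightarrow> real" and j k :: "'k::finite"
  assumes "j \<noteq> k"
  defines "cx \<equiv> \<lambda>(x::(real^'k) \<times> (real^('k\<times>'m))) i. \<Sum>m\<in>UNIV. mu m * snd x $ (i, m)"
  shows "negligible {x. cx x k \<noteq> 0 \<and> fst x $ j * cx x k = fst x $ k * cx x j}"
proof -
  define S where "S = {x::(real^'k) \<times> (real^('k\<times>'m)). fst x $ j = 0 \<and> cx x k \<noteq> 0}"
  define f where "f = (\<lambda>x::(real^'k) \<times> (real^('k\<times>'m)). x + (fst x $ k * cx x j / cx x k - fst x $ j) *\<^sub>R (axis j (1::real), 0::real^('k\<times>'m)))"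
  have negS: "negligible S"
    by (rule negligible_subset[OF negl1[of j]]) (auto simp: S_def)
  have dc: "(\<lambda>x. cx x i) differentiable (at x within S)" for i x
    unfolding cx_def by (auto intro!: derivative_intros d2)
  have "f differentiable_on S"
    unfolding differentiable_on_def f_def
  proof
    fix x assume x: "x \<in> S"
    have d1: "(\<lambda>y::(real^'k) \<times> (real^('k\<times>'m)). fst y $ i) differentiable (at x within S)" for i
      by (rule bounded_linear_imp_differentiable[OF bl1])
    have "(\<lambda>y. fst y $ k * cx y j / cx y k - fst y $ j) differentiable (at x within S)"
      using x by (intro differentiable_diff differentiable_divide differentiable_mult d1 dc) (auto simp: S_def)
    then have "(\<lambda>y. (fst y $ k * cx y j / cx y k - fst y $ j) *\<^sub>R (axis j (1::real), 0::real^('k\<times>'m))) differentiable (at x within S)"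
      by (intro differentiable_scaleR differentiable_const)
    then show "(\<lambda>y. y + (fst y $ k * cx y j / cx y k - fst y $ j) *\<^sub>R (axis j (1::real), 0::real^('k\<times>'m))) differentiable (at x within S)"
      by (intro differentiable_add differentiable_ident)
  qed
  then have "negligible (f ` S)"
    by (rule negligible_differentiable_image_negligible[OF order_refl negS])
  moreover have "{x. cx x k \<noteq> 0 \<and> fst x $ j * cx x k = fst x $ k * cx x j} \<subseteq> f ` S"
  proof
    fix x assume x: "x \<in> {x. cx x k \<noteq> 0 \<and> fst x $ j * cx x k = fst x $ k * cx x j}"
    define y where "y = x - (fst x $ j) *\<^sub>R (axis j (1::real), 0::real^('k\<times>'m))"
    have yj: "fst y $ j = 0" by (simp add: y_def)
    have yk: "fst y $ k = fst x $ k" using assms(1) by (simp add: y_def axis_def)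
    have yc: "cx y i = cx x i" for i by (simp add: y_def cx_def)
    have "y \<in> S" using x yj yc by (simp add: S_def)
    moreover have "f y = x"
    proof -
      have e: "fst x $ k * cx x j / cx x k = fst x $ j" using x by (simp add: field_simps)
      show ?thesis unfolding f_def yj yk yc e by (simp add: y_def)
    qed
    ultimately show "x \<in> f ` S" by (metis image_eqI)
  qed
  ultimately show ?thesis by (rule negligible_subset)
qed


lemma kkt_opt:
  fixes h c Pst p q :: "'k::finite \<Rightarrow> real"
  assumes hpos: "\<And>k. h k > 0" and cnn: "\<And>k. c k \<ge> 0"
   and feas: "feasible Pst p"
   and S: "S = 1 + (\<Sum>k\<in>UNIV. h k * p k)"
   and kkt1: "\<And>k. p k < Pst k \<Longrightarrow> h k \<le> S * c k"
   and kkt2: "\<And>k. 0 < p k \<Longrightarrow> S * c k \<le> h k"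
   and uniq: "\<And>j k. j \<noteq> k \<Longrightarrow> h j = S * c j \<Longrightarrow> h k = S * c k \<Longrightarrow> False"
   and fq: "feasible Pst q" and qp: "q \<noteq> p"
  shows "ln (1 + (\<Sum>k\<in>UNIV. h k * q k)) - (\<Sum>k\<in>UNIV. c k * q k) < ln S - (\<Sum>k\<in>UNIV. c k * p k)"
proof -
  have p0: "\<And>k. 0 \<le> p k" "\<And>k. p k \<le> Pst k" using feas by (auto simp: feasible_def)
  have q0: "\<And>k. 0 \<le> q k" "\<And>k. q k \<le> Pst k" using fq by (auto simp: feasible_def)
  define Sq where "Sq = 1 + (\<Sum>k\<in>UNIV. h k * q k)"
  have "0 \<le> (\<Sum>k\<in>UNIV. h k * p k)" using p0 hpos by (intro sum_nonneg) (simp add: less_imp_le)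
  then have S0: "S > 0" using S by simp
  have "0 \<le> (\<Sum>k\<in>UNIV. h k * q k)" using q0 hpos by (intro sum_nonneg) (simp add: less_imp_le)
  then have Sq0: "Sq > 0" using Sq_def by simp
  define d where "d k = (h k - S*c k) * (q k - p k)" for k
  have dle: "d k \<le> 0" for k
  proof (cases "q k > p k")
    case True
    then have "p k < Pst k" using q0 by (meson less_le_trans)
    then have "h k - S * c k \<le> 0" using kkt1 by simp
    then show ?thesis unfolding d_def using True by (simp add: mult_nonpos_nonneg)
  next
    case False
    show ?thesis
    proof (cases "q k = p k")
      case True then show ?thesis by (simp add: d_def)
    next
      case F2: False
      with False have "q k < p k" by simp
      then have "0 < p k" using q0 by (meson le_less_trans)
      then have "h k - S * c k \<ge> 0" using kkt2 by simp
      then show ?thesis unfolding d_def using \<open>q k < p k\<close> by (simp add: mult_nonneg_nonpos)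
    qed
  qed
  have sd: "(\<Sum>k\<in>UNIV. d k) = (Sq - S) - S * ((\<Sum>k\<in>UNIV. c k * q k) - (\<Sum>k\<in>UNIV. c k * p k))"
  proof -
    have "Sq - S = (\<Sum>k\<in>UNIV. h k * (q k - p k))" by (simp add: Sq_def S sum_subtractf algebra_simps)
    moreover have "d k = h k * (q k - p k) - S * (c k * q k - c k * p k)" for k
      unfolding d_def by (simp add: algebra_simps)
    moreover have "(\<Sum>k\<in>UNIV. S * (c k * q k - c k * p k)) = S * ((\<Sum>k\<in>UNIV. c k * q k) - (\<Sum>k\<in>UNIV. c k * p k))"
      by (simp add: sum_distrib_left[symmetric] sum_subtractf)
    ultimately show ?thesis by (simp add: sum_subtractf)
  qed
  have eq: "(Sq - S)/S - ((\<Sum>k\<in>UNIV. c k * q k) - (\<Sum>k\<in>UNIV. c k * p k)) = (\<Sum>k\<in>UNIV. d k) / S"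
    using S0 unfolding sd by (simp add: field_simps)
  have sdle: "(\<Sum>k\<in>UNIV. d k) \<le> 0" using dle by (simp add: sum_nonpos)
  show ?thesis
  proof (cases "Sq = S")
    case False
    have "ln Sq - ln S < (Sq - S)/S" using ln_diff_less[OF Sq0 S0 False] .
    moreover have "(\<Sum>k\<in>UNIV. d k) / S \<le> 0" using sdle S0 by (simp add: divide_nonpos_pos)
    ultimately show ?thesis using eq unfolding Sq_def by linarith
  next
    case True
    have "(\<Sum>k\<in>UNIV. d k) < 0"
    proof (rule ccontr)
      assume "\<not> (\<Sum>k\<in>UNIV. d k) < 0"
      then have "(\<Sum>k\<in>UNIV. (- d k)) = 0" using sdle by (simp add: sum_negf)
      then have dz: "\<And>k. d k = 0" using dle sum_nonneg_eq_0_iff[of UNIV "\<lambda>k. - d k"] by auto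
      obtain k0 where k0: "q k0 \<noteq> p k0" using qp by auto
      then have hk0: "h k0 = S * c k0" using dz[of k0] by (simp add: d_def)
      have oth: "q j = p j" if "j \<noteq> k0" for j
      proof -
        have "h j \<noteq> S * c j" using uniq[OF that _ hk0] by blast
        then show ?thesis using dz[of j] by (simp add: d_def)
      qed
      have "(\<Sum>k\<in>UNIV. h k * (q k - p k)) = h k0 * (q k0 - p k0) + (\<Sum>k\<in>UNIV-{k0}. h k * (q k - p k))"
        by (rule sum.remove) auto
      also have "(\<Sum>k\<in>UNIV-{k0}. h k * (q k - p k)) = 0" using oth by (intro sum.neutral) auto
      finally have "(\<Sum>k\<in>UNIV. h k * (q k - p k)) \<noteq> 0" using k0 hpos[of k0] by simp
      moreover have "Sq - S = (\<Sum>k\<in>UNIV. h k * (q k - p k))" by (simp add: Sq_def S sum_subtractf algebra_simps)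
      ultimately show False using True by simp
    qed
    then have "(\<Sum>k\<in>UNIV. d k) / S < 0" using S0 by (simp add: divide_neg_pos)
    moreover have "ln Sq - ln S = 0" using True by simp
    moreover have "(Sq - S)/S = 0" using True by simp
    ultimately show ?thesis using eq True unfolding Sq_def by linarith
  qed
qed
lemma obj_eq: "objective mu h g q = ln (1 + (\<Sum>k\<in>UNIV. h k * q k)) - (\<Sum>k\<in>UNIV. interf_cost mu g k * q k)"
proof -
  have "(\<Sum>m\<in>UNIV. mu m * (\<Sum>k\<in>UNIV. g k m * q k)) = (\<Sum>m\<in>UNIV. \<Sum>k\<in>UNIV. mu m * g k m * q k)"
    by (simp add: sum_distrib_left mult.assoc)
  also have "\<dots> = (\<Sum>k\<in>UNIV. \<Sum>m\<in>UNIV. mu m * g k m * q k)" by (rule sum.swap)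
  also have "\<dots> = (\<Sum>k\<in>UNIV. interf_cost mu g k * q k)"
    by (simp add: interf_cost_def sum_distrib_right)
  finally show ?thesis unfolding objective_def by simp
qed

lemma R1:
  assumes "interf_cost mu g k \<ge> 0" "ratio mu h g k \<le> ereal s"
  shows "h k \<le> s * interf_cost mu g k"
proof -
  have c: "interf_cost mu g k \<noteq> 0" using assms(2) by (auto simp: ratio_def)
  then have "h k / interf_cost mu g k \<le> s" using assms(2) by (simp add: ratio_def)
  with c assms(1) show ?thesis by (simp add: divide_le_eq mult.commute)
qed

lemma R2:
  assumes "interf_cost mu g k \<ge> 0" "h k \<ge> 0" "ereal s \<le> ratio mu h g k"
  shows "s * interf_cost mu g k \<le> h k"
proof (cases "interf_cost mu g k = 0")
  case True then show ?thesis using assms by simp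
next
  case False
  then have "s \<le> h k / interf_cost mu g k" using assms(3) by (simp add: ratio_def)
  with False assms(1) show ?thesis by (simp add: le_divide_eq mult.commute)
qed

lemma det:
  fixes mu :: "'m::finite \<Rightarrow> real" and h :: "'k::finite \<Rightarrow> real" and g :: "'k \<Rightarrow> 'm \<Rightarrow> real"
    and Pst :: "'k \<Rightarrow> real" and \<pi> :: "nat \<Rightarrow> 'k" and p :: "'k \<Rightarrow> real"
  assumes mu: "\<And>m. mu m \<ge> 0" and P: "\<And>k. Pst k > 0" and hpos: "\<And>k. h k > 0" and gnn: "\<And>k m. g k m \<ge> 0"
    and ties: "\<And>j k. j \<noteq> k \<Longrightarrow> interf_cost mu g k \<noteq> 0 \<Longrightarrow> h j * interf_cost mu g k \<noteq> h k * interf_cost mu g j"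
    and bij: "bij_betw \<pi> {1..CARD('k)} UNIV"
    and sorted: "\<forall>a b. 1 \<le> a \<and> a \<le> b \<and> b \<le> CARD('k) \<longrightarrow> ratio mu h g (\<pi> b) \<le> ratio mu h g (\<pi> a)"
    and pdef: "\<forall>a\<in>{1..CARD('k)}. p (\<pi> a) = opt_power mu Pst h g \<pi> a"
  shows "feasible Pst p \<and> (\<forall>q. feasible Pst q \<and> q \<noteq> p \<longrightarrow> objective mu h g q < objective mu h g p)"
proof -
  define K where "K = CARD('k)"
  define r where "r = ratio mu h g"
  define c where "c = interf_cost mu g"
  define part where "part = partial_rx Pst h \<pi>"
  define I where "I = Icard mu Pst h g \<pi>"
  define A where "A = {x \<in> {1..K}. r (\<pi> x) > ereal (1 + part x)}"
  define pp where "pp = opt_power mu Pst h g \<pi>"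
  define t where "t = (if r (\<pi> I) = PInfty then Pst (\<pi> I)
        else min (Pst (\<pi> I)) ((real_of_ereal (r (\<pi> I)) - 1 - part I) * (1 / h (\<pi> I))))"
  have cnn: "c k \<ge> 0" for k unfolding c_def interf_cost_def using mu gnn by (simp add: sum_nonneg)
  have K1: "K \<ge> 1" unfolding K_def by (simp add: Suc_leI)
  have Idef: "I = Max ({0} \<union> A)" unfolding I_def Icard_def A_def K_def r_def part_def by simp
  have finA: "finite ({0} \<union> A)" unfolding A_def by simp
  have IK: "I \<le> K" unfolding Idef using finA by (subst Max_le_iff) (auto simp: A_def)
  have IA: "I \<in> A" if "I \<ge> 1"
  proof -
    have "I \<in> {0} \<union> A" unfolding Idef using finA by (intro Max_in) auto
    with that show ?thesis by auto
  qed
  have notA: "\<not> r (\<pi> x) > ereal (1 + part x)" if "I < x" "x \<le> K" for x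
  proof
    assume "r (\<pi> x) > ereal (1 + part x)"
    then have "x \<in> {0} \<union> A" using that by (auto simp: A_def)
    then have "x \<le> I" unfolding Idef using finA by (intro Max_ge)
    with that show False by simp
  qed
  have ppd: "pp a = (if a < I then Pst (\<pi> a) else if a = I then t else 0)" for a
    unfolding pp_def opt_power_def t_def I_def r_def part_def by (simp add: Let_def)
  have sortd: "r (\<pi> b) \<le> r (\<pi> a)" if "1 \<le> a" "a \<le> b" "b \<le> K" for a b
    using sorted that unfolding r_def K_def by blast
  have part1: "part 1 = 0" unfolding part_def partial_rx_def by simp
  have partS: "part (Suc x) = part x + h (\<pi> x) * Pst (\<pi> x)" if "x \<ge> 1" for x
    unfolding part_def partial_rx_def using that by simp
  have tfin: "r (\<pi> I) = ereal (h (\<pi> I) / c (\<pi> I)) \<and> c (\<pi> I) \<noteq> 0"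
       and tv: "t = min (Pst (\<pi> I)) ((h (\<pi> I) / c (\<pi> I) - 1 - part I) / h (\<pi> I))"
       if "r (\<pi> I) \<noteq> PInfty"
    using that unfolding t_def r_def c_def ratio_def by (auto split: if_splits)
  have tpos: "0 \<le> t \<and> t \<le> Pst (\<pi> I)" if "I \<ge> 1"
  proof (cases "r (\<pi> I) = PInfty")
    case True then show ?thesis using P by (simp add: t_def less_imp_le)
  next
    case False
    have "r (\<pi> I) > ereal (1 + part I)" using IA[OF that] by (simp add: A_def)
    then have "h (\<pi> I) / c (\<pi> I) > 1 + part I" using tfin[OF False] by simp
    then have "(h (\<pi> I) / c (\<pi> I) - 1 - part I) / h (\<pi> I) \<ge> 0" using hpos[of "\<pi> I"] by simp
    then show ?thesis using tv[OF False] P[of "\<pi> I"] by simp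
  qed
  have ppfeas: "0 \<le> pp a \<and> pp a \<le> Pst (\<pi> a)" if "1 \<le> a" for a
    using ppd[of a] tpos P[of "\<pi> a"] that by (auto simp: less_imp_le)
  have surj: "\<exists>a\<in>{1..K}. \<pi> a = k" for k
    using bij unfolding bij_betw_def K_def by (metis UNIV_I imageE)
  have pk: "p (\<pi> a) = pp a" if "a \<in> {1..K}" for a using pdef that unfolding pp_def K_def by blast
  have feas: "feasible Pst p"
    unfolding feasible_def
  proof
    fix k
    obtain a where "a \<in> {1..K}" "\<pi> a = k" using surj by blast
    then show "0 \<le> p k \<and> p k \<le> Pst k" using pk ppfeas by force
  qed
  define S where "S = 1 + (\<Sum>k\<in>UNIV. h k * p k)"
  have "(\<Sum>k\<in>UNIV. h k * p k) = (\<Sum>a\<in>{1..K}. h (\<pi> a) * p (\<pi> a))"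
    using sum.reindex_bij_betw[OF bij[folded K_def], of "\<lambda>k. h k * p k"] by simp
  also have "\<dots> = (\<Sum>a\<in>{1..K}. h (\<pi> a) * pp a)" using pk by simp
  also have "\<dots> = part I + (if I = 0 then 0 else h (\<pi> I) * t)"
  proof (cases "I = 0")
    case True
    then show ?thesis using ppd by (simp add: part_def partial_rx_def)
  next
    case False
    define f where "f a = h (\<pi> a) * pp a" for a
    have "(\<Sum>a\<in>{1..K}. f a) = (\<Sum>a\<in>{1..<Suc K}. f a)" by (simp add: atLeastLessThanSuc_atLeastAtMost)
    also have "\<dots> = (\<Sum>a\<in>{1..<I}. f a) + (\<Sum>a\<in>{I..<Suc K}. f a)"
      using False IK by (intro sum.atLeastLessThan_concat[symmetric]) auto
    also have "(\<Sum>a\<in>{I..<Suc K}. f a) = f I + (\<Sum>a\<in>{Suc I..<Suc K}. f a)"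
      using IK by (intro sum.atLeast_Suc_lessThan) auto
    also have "(\<Sum>a\<in>{Suc I..<Suc K}. f a) = 0" by (intro sum.neutral) (auto simp: f_def ppd)
    also have "(\<Sum>a\<in>{1..<I}. f a) = part I" unfolding part_def partial_rx_def
      by (intro sum.cong) (auto simp: f_def ppd)
    finally show ?thesis using False by (simp add: f_def ppd)
  qed
  finally have Seq: "S = 1 + part I + (if I = 0 then 0 else h (\<pi> I) * t)" unfolding S_def by simp
  have Sge: "S \<ge> 1"
  proof -
    have "0 \<le> (\<Sum>k\<in>UNIV. h k * p k)" using feas hpos by (intro sum_nonneg) (simp add: feasible_def less_imp_le)
    then show ?thesis unfolding S_def by simp
  qed
  have CA: "ereal S \<le> r (\<pi> I)" if "I \<ge> 1"
  proof (cases "r (\<pi> I) = PInfty")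
    case True then show ?thesis by simp
  next
    case False
    note tf = tfin[OF False]
    have hI: "h (\<pi> I) > 0" by (rule hpos)
    have "t \<le> (h (\<pi> I) / c (\<pi> I) - 1 - part I) / h (\<pi> I)" using tv[OF False] by simp
    then have "h (\<pi> I) * t \<le> h (\<pi> I) * ((h (\<pi> I) / c (\<pi> I) - 1 - part I) / h (\<pi> I))"
      using hI by (intro mult_left_mono) auto
    also have "\<dots> = h (\<pi> I) / c (\<pi> I) - 1 - part I" using hI by simp
    finally have "S \<le> h (\<pi> I) / c (\<pi> I)" using Seq that by simp
    then show ?thesis using tf by simp
  qed
  have CC: "r (\<pi> I) \<le> ereal S" if "I \<ge> 1" "t < Pst (\<pi> I)"
  proof -
    have F: "r (\<pi> I) \<noteq> PInfty" using that(2) unfolding t_def by auto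
    note tf = tfin[OF F]
    have hI: "h (\<pi> I) > 0" by (rule hpos)
    have "t = (h (\<pi> I) / c (\<pi> I) - 1 - part I) / h (\<pi> I)" using tv[OF F] that(2) by (simp add: min_def split: if_splits)
    then have "h (\<pi> I) * t = h (\<pi> I) / c (\<pi> I) - 1 - part I" using hI by simp
    then have "S = h (\<pi> I) / c (\<pi> I)" using Seq that by simp
    then show ?thesis using tf by simp
  qed
  have CB: "r (\<pi> a) \<le> ereal S" if "I < a" "a \<le> K" for a
  proof -
    have n: "r (\<pi> (Suc I)) \<le> ereal (1 + part (Suc I))" using notA[of "Suc I"] that by (simp add: not_less)
    have so: "r (\<pi> a) \<le> r (\<pi> (Suc I))" using sortd[of "Suc I" a] that by simp
    show ?thesis
    proof (cases "I = 0")
      case True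
      then have "S = 1 + part (Suc I)" using Seq part1 by (simp add: part_def partial_rx_def)
      then have "ereal (1 + part (Suc I)) = ereal S" by simp
        with order_trans[OF so n] show ?thesis by (rule ord_le_eq_trans)
    next
      case False
      show ?thesis
      proof (cases "t = Pst (\<pi> I)")
        case True
        have e1: "S = 1 + part I + h (\<pi> I) * t" using Seq False by simp
        have e2: "part (Suc I) = part I + h (\<pi> I) * Pst (\<pi> I)" using partS[of I] False by simp
        have "S = 1 + part (Suc I)" unfolding e1 e2 True by simp
        then have "ereal (1 + part (Suc I)) = ereal S" by simp
        with order_trans[OF so n] show ?thesis by (rule ord_le_eq_trans)
      next
        case F2: False
        have I1: "1 \<le> I" using False by simp
        have "t < Pst (\<pi> I)" using tpos[OF I1] F2 by auto
        then have "r (\<pi> I) \<le> ereal S" by (rule CC[OF I1])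
        moreover have "r (\<pi> a) \<le> r (\<pi> I)" by (rule sortd) (use that I1 in auto)
        ultimately show ?thesis by (rule order_trans[rotated])
      qed
    qed
  qed
  have kkt1: "h k \<le> S * c k" if "p k < Pst k" for k
  proof -
    obtain a where a: "a \<in> {1..K}" "\<pi> a = k" using surj by blast
    have lt: "pp a < Pst (\<pi> a)" using that a pk by auto
    have "r (\<pi> a) \<le> ereal S"
    proof (cases "a < I")
      case True then show ?thesis using lt ppd[of a] by simp
    next
      case False
      show ?thesis
      proof (cases "a = I")
        case True then show ?thesis using CC lt ppd[of a] a by auto
      next
        case F2: False then show ?thesis using CB a False by auto
      qed
    qed
    then show ?thesis using R1[of mu g "\<pi> a" h S] cnn a unfolding r_def c_def by simp
  qed
  have kkt2: "S * c k \<le> h k" if "0 < p k" for k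
  proof -
    obtain a where a: "a \<in> {1..K}" "\<pi> a = k" using surj by blast
    have gt: "0 < pp a" using that a pk by auto
    have "ereal S \<le> r (\<pi> a)"
    proof (cases "a \<le> I")
      case True
      then have "r (\<pi> I) \<le> r (\<pi> a)" using sortd[of a I] a IK by simp
      moreover have "ereal S \<le> r (\<pi> I)" using CA True a by simp
      ultimately show ?thesis by simp
    next
      case False then show ?thesis using gt ppd[of a] by simp
    qed
    then show ?thesis using R2[of mu g "\<pi> a" h S] cnn hpos[of k] a unfolding r_def c_def by (simp add: less_imp_le)
  qed
  have uniq: False if "j \<noteq> k" "h j = S * c j" "h k = S * c k" for j k
  proof -
    have "c k \<noteq> 0" using that(3) hpos[of k] by auto
    then have "h j * c k \<noteq> h k * c j" using ties[OF that(1)] unfolding c_def by simp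
    moreover have "h j * c k = h k * c j" using that by simp
    ultimately show False by simp
  qed
  show ?thesis
  proof (intro conjI allI impI feas)
    fix q assume q: "feasible Pst q \<and> q \<noteq> p"
    have "ln (1 + (\<Sum>k\<in>UNIV. h k * q k)) - (\<Sum>k\<in>UNIV. c k * q k) < ln S - (\<Sum>k\<in>UNIV. c k * p k)"
      by (rule kkt_opt[OF hpos cnn feas S_def kkt1 kkt2]) (use q uniq in blast)+
    then show "objective mu h g q < objective mu h g p" unfolding obj_eq S_def c_def .
  qed
qed

theorem lemma3p5:
  fixes M :: "'w measure"
    and H :: "'k::finite \<Rightarrow> 'w \<Rightarrow> real"
    and G :: "'k \<Rightarrow> 'm::finite \<Rightarrow> 'w \<Rightarrow> real"
    and mu :: "'m \<Rightarrow> real"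
    and Pst :: "'k \<Rightarrow> real"
  assumes "prob_space M"
    and "\<And>k. H k \<in> borel_measurable M"
    and "\<And>k m. G k m \<in> borel_measurable M"
    and "\<And>k w. w \<in> space M \<Longrightarrow> H k w \<ge> 0"
    and "\<And>k m w. w \<in> space M \<Longrightarrow> G k m w \<ge> 0"
    and "prob_space.indep_vars M (\<lambda>_. borel)
           (\<lambda>i w. case i of Inl k \<Rightarrow> H k w | Inr km \<Rightarrow> G (fst km) (snd km) w) UNIV"
    and "absolutely_continuous lborel
           (distr M lborel (\<lambda>w. ((\<chi> k. H k w) :: real^'k,
                                  (\<chi> km. G (fst km) (snd km) w) :: real^('k \<times> 'm))))"
    and "\<And>m. mu m \<ge> 0"
    and "\<And>k. Pst k > 0"
  shows "AE w in M. \<forall>\<pi> :: nat \<Rightarrow> 'k.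
     (bij_betw \<pi> {1..CARD('k)} UNIV \<and>
      (\<forall>a b. 1 \<le> a \<and> a \<le> b \<and> b \<le> CARD('k) \<longrightarrow>
           ratio mu (\<lambda>k. H k w) (\<lambda>k m. G k m w) (\<pi> b) \<le> ratio mu (\<lambda>k. H k w) (\<lambda>k m. G k m w) (\<pi> a)))
     \<longrightarrow> (\<forall>p. (\<forall>a\<in>{1..CARD('k)}. p (\<pi> a) = opt_power mu Pst (\<lambda>k. H k w) (\<lambda>k m. G k m w) \<pi> a) \<longrightarrow>
            feasible Pst p \<and>
            (\<forall>q. feasible Pst q \<and> q \<noteq> p \<longrightarrow>
                 objective mu (\<lambda>k. H k w) (\<lambda>k m. G k m w) q
                   < objective mu (\<lambda>k. H k w) (\<lambda>k m. G k m w) p))"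
  proof -
  define F where "F = (\<lambda>w. ((\<chi> k. H k w) :: real^'k,
                                  (\<chi> km. G (fst km) (snd km) w) :: real^('k \<times> 'm)))"
  have Fm: "F \<in> borel_measurable M" unfolding F_def by (rule meas[OF assms(2,3)])
  have ac: "absolutely_continuous lborel (distr M lborel F)" using assms(7) unfolding F_def .
  have A1: "AE w in M. \<forall>k\<in>UNIV. H k w \<noteq> 0"
  proof (rule AE_finite_allI)
    fix k :: 'k
    have "AE w in M. F w \<notin> {x::(real^'k) \<times> (real^('k\<times>'m)). fst x $ k = 0}"
      by (rule ae_negl[OF Fm ac negl1])
    then show "AE w in M. H k w \<noteq> 0" by (simp add: F_def)
  qed simp
  have A2: "AE w in M. \<forall>jk\<in>UNIV. fst jk \<noteq> snd jk \<longrightarrow>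
      interf_cost mu (\<lambda>k m. G k m w) (snd jk) \<noteq> 0 \<longrightarrow>
      H (fst jk) w * interf_cost mu (\<lambda>k m. G k m w) (snd jk) \<noteq> H (snd jk) w * interf_cost mu (\<lambda>k m. G k m w) (fst jk)"
  proof (rule AE_finite_allI)
    fix jk :: "'k \<times> 'k"
    obtain j k where jk: "jk = (j, k)" by (cases jk)
    show "AE w in M. fst jk \<noteq> snd jk \<longrightarrow>
      interf_cost mu (\<lambda>k m. G k m w) (snd jk) \<noteq> 0 \<longrightarrow>
      H (fst jk) w * interf_cost mu (\<lambda>k m. G k m w) (snd jk) \<noteq> H (snd jk) w * interf_cost mu (\<lambda>k m. G k m w) (fst jk)"
    proof (cases "j = k")
      case True then show ?thesis by (simp add: jk)
    next
      case False
      have "AE w in M. F w \<notin> {x. (\<Sum>m\<in>UNIV. mu m * snd x $ (k, m)) \<noteq> 0 \<and>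
          fst x $ j * (\<Sum>m\<in>UNIV. mu m * snd x $ (k, m)) = fst x $ k * (\<Sum>m\<in>UNIV. mu m * snd x $ (j, m))}"
        by (rule ae_negl[OF Fm ac negl2[OF False]])
      then show ?thesis by eventually_elim (auto simp: F_def jk interf_cost_def)
    qed
  qed simp
  show ?thesis
    using A1 A2 AE_space
  proof eventually_elim
    case (elim w)
    show ?case
    proof (intro allI impI)
      fix \<pi> :: "nat \<Rightarrow> 'k" and p
      assume h1: "bij_betw \<pi> {1..CARD('k)} UNIV \<and>
      (\<forall>a b. 1 \<le> a \<and> a \<le> b \<and> b \<le> CARD('k) \<longrightarrow>
           ratio mu (\<lambda>k. H k w) (\<lambda>k m. G k m w) (\<pi> b) \<le> ratio mu (\<lambda>k. H k w) (\<lambda>k m. G k m w) (\<pi> a))"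
      assume h2: "\<forall>a\<in>{1..CARD('k)}. p (\<pi> a) = opt_power mu Pst (\<lambda>k. H k w) (\<lambda>k m. G k m w) \<pi> a"
      have hpos: "\<And>k. H k w > 0" using elim assms(4) by (metis UNIV_I less_eq_real_def)
      have gnn: "\<And>k m. G k m w \<ge> 0" using elim assms(5) by blast
      have ties: "\<And>j k. j \<noteq> k \<Longrightarrow> interf_cost mu (\<lambda>k m. G k m w) k \<noteq> 0 \<Longrightarrow>
          H j w * interf_cost mu (\<lambda>k m. G k m w) k \<noteq> H k w * interf_cost mu (\<lambda>k m. G k m w) j"
        using elim(2) by fastforce
      show "feasible Pst p \<and>
            (\<forall>q. feasible Pst q \<and> q \<noteq> p \<longrightarrow>
                 objective mu (\<lambda>k. H k w) (\<lambda>k m. G k m w) q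
                   < objective mu (\<lambda>k. H k w) (\<lambda>k m. G k m w) p)"
        by (rule det[where h="\<lambda>k. H k w" and g="\<lambda>k m. G k m w", OF assms(8,9) hpos gnn ties])
           (use h1 h2 in auto)
    qed
  qed
qed

end
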